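(* In the setting of the context, Axiom (P2) holds for the projection distances $\{d_a\mid a\in C\}$ with any $\theta\ge4\delta$: for pairwise distinct $a,b,c\in C$, if $d_a(b,c)>\theta$ then $d_b(a,c)\le\theta$.
   Context: $X$ is a $\delta$-hyperbolic geodesic metric space ($\delta>0$, every geodesic triangle $\delta$-thin). $G$ acts on $X$ by isometries and $\mathcal{C}=(C,\{G_c\})$ is a $\rho$-separated fairly rotating family with $\rho\ge20\delta$ (i.e. $C\subseteq X$ is $G$-invariant, $G_c$ fixes $c$, $G_{gc}=gG_cg^{-1}$, distinct points of $C$ are at distance $\ge\rho$, and for $c\in C$, $g\in G_c\setminus\{1\}$, $x\in C\setminus\{c\}$ some geodesic from $x$ to $gx$ meets the closed $1$-ball about $c$). Fix $2+2\delta\le R\le\frac\rho2-3\delta$; $B_r(p)$ denotes the open ball. For $p\in C$, $S_p=\{x:d(x,p)=R\}$ with metric $d_{S_p}(x,y)=$ infimum of lengths of paths from $x$ to $y$ in $X\setminus B_R(p)$ (possibly $\infty$). For $x\in C\setminus\{p\}$, $\pi_p(x)\subseteq S_p$ is the set of points where geodesics $[p,x]$ meet $S_p$, and $d_p(x,y)=\operatorname{diam}_{S_p}(\pi_p(x)\cup\pi_p(y))$. *)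

theory Defs
  imports "HOL-Analysis.Analysis" "HOL-Algebra.Group"
begin

(* X is the whole metric space type 'a. *)

definition geodesic_seg :: "(real \<Rightarrow> 'a::metric_space) \<Rightarrow> 'a \<Rightarrow> 'a \<Rightarrow> bool" where
  "geodesic_seg \<gamma> x y \<longleftrightarrow> \<gamma> 0 = x \<and> \<gamma> (dist x y) = y \<and>
     (\<forall>s\<in>{0..dist x y}. \<forall>t\<in>{0..dist x y}. dist (\<gamma> s) (\<gamma> t) = \<bar>s - t\<bar>)"

definition geod_image :: "(real \<Rightarrow> 'a::metric_space) \<Rightarrow> 'a \<Rightarrow> 'a \<Rightarrow> 'a set" where
  "geod_image \<gamma> x y = \<gamma> ` {0..dist x y}"

definition geodesic_space :: "'a::metric_space itself \<Rightarrow> bool" where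
  "geodesic_space _ \<longleftrightarrow> (\<forall>x y::'a. \<exists>\<gamma>. geodesic_seg \<gamma> x y)"

definition cnbhd :: "real \<Rightarrow> 'a::metric_space set \<Rightarrow> 'a set" where
  "cnbhd r A = {z. \<exists>a\<in>A. dist z a \<le> r}"

definition hyperbolic :: "real \<Rightarrow> 'a::metric_space itself \<Rightarrow> bool" where
  "hyperbolic \<delta> _ \<longleftrightarrow> (\<forall>(x::'a) y z \<alpha> \<beta> \<gamma>.
     geodesic_seg \<alpha> x y \<and> geodesic_seg \<beta> y z \<and> geodesic_seg \<gamma> z x \<longrightarrow>
       geod_image \<alpha> x y \<subseteq> cnbhd \<delta> (geod_image \<beta> y z \<union> geod_image \<gamma> z x) \<and>
       geod_image \<beta> y z \<subseteq> cnbhd \<delta> (geod_image \<gamma> z x \<union> geod_image \<alpha> x y) \<and>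
       geod_image \<gamma> z x \<subseteq> cnbhd \<delta> (geod_image \<alpha> x y \<union> geod_image \<beta> y z))"

definition isometric_action :: "('g, 'b) monoid_scheme \<Rightarrow> ('g \<Rightarrow> 'a::metric_space \<Rightarrow> 'a) \<Rightarrow> bool" where
  "isometric_action G act \<longleftrightarrow>
     act \<one>\<^bsub>G\<^esub> = id \<and>
     (\<forall>g\<in>carrier G. \<forall>h\<in>carrier G. act (g \<otimes>\<^bsub>G\<^esub> h) = act g \<circ> act h) \<and>
     (\<forall>g\<in>carrier G. \<forall>x y. dist (act g x) (act g y) = dist x y)"

definition fairly_rotating_family ::
  "('g, 'b) monoid_scheme \<Rightarrow> ('g \<Rightarrow> 'a::metric_space \<Rightarrow> 'a) \<Rightarrow> 'a set \<Rightarrow> ('a \<Rightarrow> 'g set) \<Rightarrow> real \<Rightarrow> bool" where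
  "fairly_rotating_family G act C Gc \<rho> \<longleftrightarrow>
     (\<forall>g\<in>carrier G. \<forall>c\<in>C. act g c \<in> C) \<and>
     (\<forall>c\<in>C. subgroup (Gc c) G) \<and>
     (\<forall>c\<in>C. \<forall>g\<in>Gc c. act g c = c) \<and>
     (\<forall>c\<in>C. \<forall>g\<in>carrier G. Gc (act g c) = (\<lambda>h. g \<otimes>\<^bsub>G\<^esub> h \<otimes>\<^bsub>G\<^esub> inv\<^bsub>G\<^esub> g) ` Gc c) \<and>
     (\<forall>c\<in>C. \<forall>c'\<in>C. c \<noteq> c' \<longrightarrow> dist c c' \<ge> \<rho>) \<and>
     (\<forall>c\<in>C. \<forall>g\<in>Gc c - {\<one>\<^bsub>G\<^esub>}. \<forall>x\<in>C - {c}.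
        \<exists>\<gamma>. geodesic_seg \<gamma> x (act g x) \<and> geod_image \<gamma> x (act g x) \<inter> cball c 1 \<noteq> {})"

definition path_len :: "(real \<Rightarrow> 'a::metric_space) \<Rightarrow> ereal" where
  "path_len \<gamma> = (SUP (n, t) \<in> {(n::nat, t::nat \<Rightarrow> real). t 0 = 0 \<and> t n = 1 \<and>
        (\<forall>i<n. t i \<le> t (Suc i))}.
       ereal (\<Sum>i<n. dist (\<gamma> (t i)) (\<gamma> (t (Suc i)))))"

(* induced path metric on S_p: inf of lengths of paths from x to y in X \ B_R(p)
   (possibly infinity; Inf {} = infinity) *)
definition dS :: "real \<Rightarrow> 'a::metric_space \<Rightarrow> 'a \<Rightarrow> 'a \<Rightarrow> ereal" where
  "dS R p x y = (INF \<gamma> \<in> {\<gamma>. continuous_on {0..1} \<gamma> \<and> \<gamma> 0 = x \<and> \<gamma> 1 = y \<and>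
        \<gamma> ` {0..1} \<subseteq> - ball p R}. path_len \<gamma>)"

definition Sph :: "real \<Rightarrow> 'a::metric_space \<Rightarrow> 'a set" where
  "Sph R p = {x. dist x p = R}"

definition proj :: "real \<Rightarrow> 'a::metric_space \<Rightarrow> 'a \<Rightarrow> 'a set" where
  "proj R p x = {z \<in> Sph R p. \<exists>\<gamma>. geodesic_seg \<gamma> p x \<and> z \<in> geod_image \<gamma> p x}"

definition projdist :: "real \<Rightarrow> 'a::metric_space \<Rightarrow> 'a \<Rightarrow> 'a \<Rightarrow> ereal" where
  "projdist R p x y = (SUP u \<in> proj R p x \<union> proj R p y. SUP v \<in> proj R p x \<union> proj R p y. dS R p u v)"

end

theory Submission
  imports Defs
begin

lemma geo_dist: "geodesic_seg g x y \<Longrightarrow> s \<in> {0..dist x y} \<Longrightarrow> t \<in> {0..dist x y} \<Longrightarrow> dist (g s) (g t) = \<bar>s - t\<bar>"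
  by (simp add: geodesic_seg_def)

lemma geo_start: assumes "geodesic_seg g x y" "0 \<le> s" "s \<le> dist x y" shows "dist x (g s) = s"
proof -
  have "x = g 0" using assms(1) by (simp add: geodesic_seg_def)
  then show ?thesis using geo_dist[OF assms(1), of 0 s] assms by simp
qed

lemma geo_end: assumes "geodesic_seg g x y" "0 \<le> s" "s \<le> dist x y" shows "dist (g s) y = dist x y - s"
proof -
  have "y = g (dist x y)" using assms(1) by (simp add: geodesic_seg_def)
  then show ?thesis using geo_dist[OF assms(1), of s "dist x y"] assms by simp
qed

lemma geo_rev:
  assumes "geodesic_seg g x y"
  shows "geodesic_seg (\<lambda>s. g (dist x y - s)) y x" "geod_image (\<lambda>s. g (dist x y - s)) y x = geod_image g x y"
proof -
  show "geodesic_seg (\<lambda>s. g (dist x y - s)) y x"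
    using assms unfolding geodesic_seg_def by (auto simp: dist_commute)
  have "(\<lambda>s. dist x y - s) ` {0..dist x y} = {0..dist x y}"
  proof
    show "(\<lambda>s. dist x y - s) ` {0..dist x y} \<subseteq> {0..dist x y}" by auto
    show "{0..dist x y} \<subseteq> (\<lambda>s. dist x y - s) ` {0..dist x y}"
    proof
      fix s assume "s \<in> {0..dist x y}"
      then show "s \<in> (\<lambda>s. dist x y - s) ` {0..dist x y}"
        by (intro image_eqI[of _ _ "dist x y - s"]) auto
    qed
  qed
  then show "geod_image (\<lambda>s. g (dist x y - s)) y x = geod_image g x y"
    unfolding geod_image_def by (simp add: dist_commute image_image[symmetric, of g "\<lambda>s. dist x y - s"])
qed

lemma path_len_lip:
  assumes "\<And>s t. dist (f s) (f t) \<le> L * \<bar>s - t\<bar>"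
  shows "path_len f \<le> ereal L"
  unfolding path_len_def
proof (rule SUP_least, clarify)
  fix n :: nat and t :: "nat \<Rightarrow> real"
  assume h: "t 0 = 0" "t n = 1" "\<forall>i<n. t i \<le> t (Suc i)"
  have "(\<Sum>i<n. dist (f (t i)) (f (t (Suc i)))) \<le> (\<Sum>i<n. L * (t (Suc i) - t i))"
  proof (rule sum_mono)
    fix i assume "i \<in> {..<n}"
    then have "t i \<le> t (Suc i)" using h by auto
    then show "dist (f (t i)) (f (t (Suc i))) \<le> L * (t (Suc i) - t i)"
      using assms[of "t i" "t (Suc i)"] by simp
  qed
  also have "\<dots> = L * (t n - t 0)"
    by (simp add: sum_distrib_left[symmetric] sum_lessThan_telescope)
  finally show "ereal (\<Sum>i<n. dist (f (t i)) (f (t (Suc i)))) \<le> ereal L" using h by simp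
qed

lemma lip_join:
  assumes "\<And>s t. dist (g s) (g t) \<le> L * \<bar>s - t\<bar>" "\<And>s t. dist (h s) (h t) \<le> L * \<bar>s - t\<bar>"
    and "g b = h b"
  shows "dist ((\<lambda>t. if t \<le> b then g t else h t) s) ((\<lambda>t. if t \<le> b then g t else h t) t) \<le> L * \<bar>s - t\<bar>"
proof -
  have m: "dist (g s) (h t) \<le> L * \<bar>s - t\<bar>" if "s \<le> b" "b \<le> t" for s t
  proof -
    have "dist (g s) (h t) \<le> dist (g s) (g b) + dist (h b) (h t)"
      using dist_triangle[of "g s" "h t" "g b"] assms(3) by simp
    also have "\<dots> \<le> L * \<bar>s - b\<bar> + L * \<bar>b - t\<bar>" using assms(1,2) by (meson add_mono)
    also have "\<dots> = L * \<bar>s - t\<bar>" using that by (simp add: algebra_simps abs_if)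
    finally show ?thesis .
  qed
  show ?thesis
    using assms(1,2) m[of s t] m[of t s] by (auto simp: dist_commute abs_minus_commute)
qed


lemma tripod:
  fixes p y z :: "'a::metric_space"
  assumes geo: "geodesic_space TYPE('a)" and hyp: "hyperbolic \<delta> TYPE('a)"
    and ga: "geodesic_seg \<alpha> p y" and gc: "geodesic_seg \<gamma> p z"
    and "R + \<delta> \<le> dist p y" "R + \<delta> \<le> dist p z" "0 \<le> R" "0 < \<delta>"
  shows "dist (\<alpha> (R+\<delta>)) (\<gamma> (R+\<delta>)) \<le> 2*\<delta> \<or> dist p y + dist p z \<le> dist y z + 2*R + 4*\<delta>"
proof -
  obtain \<beta> where gb: "geodesic_seg \<beta> y z" using geo unfolding geodesic_space_def by blast
  define \<gamma>r where "\<gamma>r = (\<lambda>s. \<gamma> (dist p z - s))"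
  have gr: "geodesic_seg \<gamma>r z p" and imr: "geod_image \<gamma>r z p = geod_image \<gamma> p z"
    using geo_rev[OF gc] unfolding \<gamma>r_def by auto
  have "geod_image \<alpha> p y \<subseteq> cnbhd \<delta> (geod_image \<beta> y z \<union> geod_image \<gamma>r z p)"
    using hyp[unfolded hyperbolic_def, rule_format, of \<alpha> p y \<beta> z \<gamma>r] ga gb gr by blast
  moreover have "\<alpha> (R+\<delta>) \<in> geod_image \<alpha> p y"
    unfolding geod_image_def using assms by auto
  ultimately obtain w where w: "w \<in> geod_image \<beta> y z \<union> geod_image \<gamma> p z" "dist (\<alpha> (R+\<delta>)) w \<le> \<delta>"
    unfolding cnbhd_def imr by blast
  have du: "dist p (\<alpha> (R+\<delta>)) = R + \<delta>" using geo_start[OF ga, of "R+\<delta>"] assms by simp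
  show ?thesis
  proof (cases "w \<in> geod_image \<gamma> p z")
    case True
    then obtain s where s: "s \<in> {0..dist p z}" "w = \<gamma> s" unfolding geod_image_def by auto
    have dw: "dist p w = s" using geo_start[OF gc, of s] s by simp
    have "\<bar>s - (R+\<delta>)\<bar> \<le> \<delta>"
      using dist_triangle[of p "\<alpha> (R+\<delta>)" w] dist_triangle[of p w "\<alpha> (R+\<delta>)"] du dw w(2)
      by (simp add: dist_commute abs_le_iff)
    moreover have "dist w (\<gamma> (R+\<delta>)) = \<bar>s - (R+\<delta>)\<bar>"
      using geo_dist[OF gc, of s "R+\<delta>"] s assms by simp
    ultimately have "dist (\<alpha> (R+\<delta>)) (\<gamma> (R+\<delta>)) \<le> 2*\<delta>"
      using dist_triangle[of "\<alpha> (R+\<delta>)" "\<gamma> (R+\<delta>)" w] w(2) by simp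
    then show ?thesis by simp
  next
    case False
    then have "w \<in> geod_image \<beta> y z" using w by blast
    then obtain s where s: "s \<in> {0..dist y z}" "w = \<beta> s" unfolding geod_image_def by auto
    have d1: "dist y w = s" using geo_start[OF gb, of s] s by simp
    have d2: "dist w z = dist y z - s" using geo_end[OF gb, of s] s by simp
    have "dist p w \<le> R + 2*\<delta>" using dist_triangle[of p w "\<alpha> (R+\<delta>)"] du w(2) by simp
    then have "dist p y + dist p z \<le> dist y z + 2*R + 4*\<delta>"
      using dist_triangle[of p y w] dist_triangle[of p z w] d1 d2 by (simp add: dist_commute)
    then show ?thesis by simp
  qed
qed

lemma pathP:
  fixes p y z :: "'a::metric_space"
  assumes geo: "geodesic_space TYPE('a)"
    and ga: "geodesic_seg \<alpha> p y" and gc: "geodesic_seg \<gamma> p z"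
    and hy: "R + \<delta> \<le> dist p y" and hz: "R + \<delta> \<le> dist p z" and R0: "0 \<le> R" and d0: "0 < \<delta>"
    and clp: "dist (\<alpha> (R+\<delta>)) (\<gamma> (R+\<delta>)) \<le> 2*\<delta>"
  shows "dS R p (\<alpha> R) (\<gamma> R) \<le> ereal (4*\<delta>)"
proof -
  define u where "u = \<alpha> (R+\<delta>)"
  define v where "v = \<gamma> (R+\<delta>)"
  define l where "l = dist u v"
  obtain \<sigma> where gs: "geodesic_seg \<sigma> u v" using geo unfolding geodesic_space_def by blast
  define clp where "clp = (\<lambda>x::real. max 0 (min 1 x))"
  have clp01: "0 \<le> clp x" "clp x \<le> 1" for x unfolding clp_def by auto
  have clplip: "\<bar>clp x - clp x'\<bar> \<le> \<bar>x - x'\<bar>" for x x' unfolding clp_def by (simp add: abs_if max_def min_def)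
  have dc: "0 \<le> \<delta> * clp x" "\<delta> * clp x \<le> \<delta>" for x
    using mult_left_le[of "clp x" \<delta>] clp01[of x] d0 by auto
  have clp0: "clp 0 = 0" and clp1: "clp 1 = 1" unfolding clp_def by auto
  define A where "A = (\<lambda>t. \<alpha> (R + \<delta> * clp (4*t)))"
  define M where "M = (\<lambda>t. \<sigma> (l * clp (2*t - 1/2)))"
  define B where "B = (\<lambda>t. \<gamma> (R + \<delta> * clp (4 - 4*t)))"
  have l0: "0 \<le> l" and l2: "l \<le> 2*\<delta>" using clp unfolding l_def u_def v_def by auto
  have lc: "0 \<le> l * clp x" "l * clp x \<le> l" for x
    using mult_left_le[of "clp x" l] clp01[of x] l0 by auto
  have Alip: "dist (A s) (A t) \<le> (4*\<delta>) * \<bar>s - t\<bar>" for s t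
  proof -
    have "dist (A s) (A t) = \<bar>(\<delta> * clp (4 * s)) - (\<delta> * clp (4*t))\<bar>"
      unfolding A_def using geo_dist[OF ga, of "R + \<delta> * clp (4 * s)" "R + \<delta> * clp (4*t)"] hy R0 d0
        clp01[of "4 * s"] clp01[of "4*t"] dc[of "4 * s"] dc[of "4*t"] by simp
    also have "\<dots> = \<delta> * \<bar>clp (4 * s) - clp (4*t)\<bar>" using d0 by (simp add: abs_mult right_diff_distrib[symmetric])
    also have "\<dots> \<le> \<delta> * \<bar>4 * s - 4*t\<bar>" using d0 clplip by (simp add: mult_left_mono)
    also have "\<dots> = (4*\<delta>) * \<bar>s - t\<bar>" by (simp add: abs_if)
    finally show ?thesis .
  qed
  have Blip: "dist (B s) (B t) \<le> (4*\<delta>) * \<bar>s - t\<bar>" for s t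
  proof -
    have "dist (B s) (B t) = \<bar>\<delta> * clp (4-4 * s) - \<delta> * clp (4-4*t)\<bar>"
      unfolding B_def using geo_dist[OF gc, of "R + \<delta> * clp (4-4 * s)" "R + \<delta> * clp (4-4*t)"] hz R0 d0
        clp01[of "4-4 * s"] clp01[of "4-4*t"] dc[of "4-4 * s"] dc[of "4-4*t"] by simp
    also have "\<dots> = \<delta> * \<bar>clp (4-4 * s) - clp (4-4*t)\<bar>" using d0 by (simp add: abs_mult right_diff_distrib[symmetric])
    also have "\<dots> \<le> \<delta> * \<bar>(4-4 * s) - (4-4*t)\<bar>" using d0 clplip[of "4-4 * s" "4-4*t"] by (intro mult_left_mono) auto
    also have "\<dots> = (4*\<delta>) * \<bar>s - t\<bar>" by (simp add: abs_if)
    finally show ?thesis .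
  qed
  have Mlip: "dist (M s) (M t) \<le> (4*\<delta>) * \<bar>s - t\<bar>" for s t
  proof -
    have "dist (M s) (M t) = \<bar>l * clp (2 * s-1/2) - l * clp (2*t-1/2)\<bar>"
      unfolding M_def using geo_dist[OF gs, of "l * clp (2 * s-1/2)" "l * clp (2*t-1/2)"] l0
        clp01[of "2 * s-1/2"] clp01[of "2*t-1/2"] lc[of "2 * s-1/2"] lc[of "2*t-1/2"]
      by (simp add: l_def)
    also have "\<dots> = l * \<bar>clp (2 * s-1/2) - clp (2*t-1/2)\<bar>" using l0 by (simp add: abs_mult right_diff_distrib[symmetric])
    also have "\<dots> \<le> l * \<bar>(2 * s-1/2) - (2*t-1/2)\<bar>" using l0 clplip[of "2 * s-1/2" "2*t-1/2"] by (intro mult_left_mono) auto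
    also have "\<dots> = (2*l) * \<bar>s - t\<bar>" by (simp add: abs_if)
    also have "\<dots> \<le> (4*\<delta>) * \<bar>s - t\<bar>" using l2 by (simp add: mult_right_mono)
    finally show ?thesis .
  qed
  define H where "H = (\<lambda>t. if t \<le> 3/4 then M t else B t)"
  define f where "f = (\<lambda>t. if t \<le> 1/4 then A t else H t)"
  have M34: "M (3/4) = B (3/4)"
    unfolding M_def B_def using clp1 gs by (simp add: geodesic_seg_def v_def l_def)
  have Hlip: "dist (H s) (H t) \<le> (4*\<delta>) * \<bar>s - t\<bar>" for s t
    unfolding H_def using lip_join[of M "4*\<delta>" B "3/4", OF Mlip Blip M34] by simp
  have A14: "A (1/4) = H (1/4)"
    unfolding A_def H_def M_def using clp1 clp0 gs by (simp add: geodesic_seg_def u_def)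
  have flip: "dist (f s) (f t) \<le> (4*\<delta>) * \<bar>s - t\<bar>" for s t
    unfolding f_def using lip_join[of A "4*\<delta>" H "1/4", OF Alip Hlip A14] by simp
  have f0: "f 0 = \<alpha> R" unfolding f_def A_def using clp0 by simp
  have f1: "f 1 = \<gamma> R" unfolding f_def H_def B_def using clp0 by simp
  have cont: "continuous_on {0..1} f"
  proof (rule lipschitz_on_continuous_on)
    show "(4*\<delta>)-lipschitz_on {0..1} f"
      unfolding lipschitz_on_def using flip d0 by (simp add: dist_real_def)
  qed
  have out: "dist p (f t) \<ge> R" for t
  proof -
    have As: "dist p (A t) \<ge> R" for t
      unfolding A_def using geo_start[OF ga, of "R + \<delta> * clp (4*t)"] hy R0 d0
        clp01[of "4*t"] dc[of "4*t"] by simp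
    have Bs: "dist p (B t) \<ge> R" for t
      unfolding B_def using geo_start[OF gc, of "R + \<delta> * clp (4-4*t)"] hz R0 d0
        clp01[of "4-4*t"] dc[of "4-4*t"] by simp
    have Ms: "dist p (M t) \<ge> R" for t
    proof -
      define r where "r = l * clp (2*t - 1/2)"
      have r: "0 \<le> r" "r \<le> l" unfolding r_def using lc by auto
      have "dist u (\<sigma> r) = r" using geo_start[OF gs, of r] r by (simp add: l_def)
      moreover have "dist (\<sigma> r) v = l - r" using geo_end[OF gs, of r] r by (simp add: l_def)
      moreover have "dist p u = R + \<delta>" unfolding u_def using geo_start[OF ga, of "R+\<delta>"] hy R0 d0 by simp
      moreover have "dist p v = R + \<delta>" unfolding v_def using geo_start[OF gc, of "R+\<delta>"] hz R0 d0 by simp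
      ultimately show ?thesis
        using dist_triangle[of p u "\<sigma> r"] dist_triangle[of p v "\<sigma> r"] l2
        unfolding M_def r_def[symmetric] by (simp add: dist_commute)
    qed
    show ?thesis unfolding f_def H_def using As Bs Ms by auto
  qed
  have "dS R p (\<alpha> R) (\<gamma> R) \<le> path_len f"
    unfolding dS_def
    by (rule INF_lower) (use cont f0 f1 out in \<open>auto simp: ball_def not_less[symmetric]\<close>)
  also have "\<dots> \<le> ereal (4*\<delta>)" using path_len_lip flip by blast
  finally show ?thesis .
qed


lemma proj_form:
  assumes "u \<in> proj R p x" "0 \<le> R"
  shows "\<exists>\<alpha>. geodesic_seg \<alpha> p x \<and> u = \<alpha> R \<and> R \<le> dist p x"
proof -
  from assms obtain \<alpha> where ga: "geodesic_seg \<alpha> p x" and ui: "u \<in> geod_image \<alpha> p x"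
    and du: "dist u p = R" unfolding proj_def Sph_def by auto
  from ui obtain s where s: "s \<in> {0..dist p x}" "u = \<alpha> s" unfolding geod_image_def by auto
  have "dist p u = s" using geo_start[OF ga, of s] s by simp
  then have "s = R" using du by (simp add: dist_commute)
  then show ?thesis using ga s by auto
qed

lemma key:
  fixes p y1 y2 :: "'a::metric_space"
  assumes geo: "geodesic_space TYPE('a)" and hyp: "hyperbolic \<delta> TYPE('a)"
    and d0: "0 < \<delta>" and R0: "0 \<le> R"
    and u: "u \<in> proj R p y1" and v: "v \<in> proj R p y2"
    and h1: "2*R + 4*\<delta> < dist p y1" and h2: "2*R + 4*\<delta> < dist p y2"
  shows "dS R p u v \<le> ereal (4*\<delta>) \<or> (y1 \<noteq> y2 \<and> dist p y1 + dist p y2 \<le> dist y1 y2 + 2*R + 4*\<delta>)"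
proof -
  obtain \<alpha> where ga: "geodesic_seg \<alpha> p y1" "u = \<alpha> R" using proj_form[OF u R0] by auto
  obtain \<gamma> where gc: "geodesic_seg \<gamma> p y2" "v = \<gamma> R" using proj_form[OF v R0] by auto
  have r1: "R + \<delta> \<le> dist p y1" and r2: "R + \<delta> \<le> dist p y2" using h1 h2 d0 R0 by auto
  from tripod[OF geo hyp ga(1) gc(1) r1 r2 R0 d0]
  show ?thesis
  proof
    assume "dist (\<alpha> (R+\<delta>)) (\<gamma> (R+\<delta>)) \<le> 2*\<delta>"
    then show ?thesis using pathP[OF geo ga(1) gc(1) r1 r2 R0 d0] ga gc by simp
  next
    assume a: "dist p y1 + dist p y2 \<le> dist y1 y2 + 2*R + 4*\<delta>"
    have "y1 \<noteq> y2" proof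
      assume "y1 = y2" then show False using a h1 zero_le_dist[of p y1] d0 R0 by auto
    qed
    then show ?thesis using a by simp
  qed
qed

theorem lemma3p5:
  fixes G :: "('g, 'b) monoid_scheme"
    and act :: "'g \<Rightarrow> 'a::metric_space \<Rightarrow> 'a"
    and C :: "'a set" and Gc :: "'a \<Rightarrow> 'g set"
    and \<delta> \<rho> R \<theta> :: real
  assumes "geodesic_space TYPE('a)"
    and "\<delta> > 0"
    and "hyperbolic \<delta> TYPE('a)"
    and "group G"
    and "isometric_action G act"
    and "fairly_rotating_family G act C Gc \<rho>"
    and "\<rho> \<ge> 20 * \<delta>"
    and "2 + 2 * \<delta> \<le> R" and "R \<le> \<rho> / 2 - 3 * \<delta>"
    and "\<theta> \<ge> 4 * \<delta>"
    and "a \<in> C" and "b \<in> C" and "c \<in> C"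
    and "a \<noteq> b" and "a \<noteq> c" and "b \<noteq> c"
    and "projdist R a b c > ereal \<theta>"
  shows "projdist R b a c \<le> ereal \<theta>"
proof -
  note geo = assms(1) and hyp = assms(3) and d0 = assms(2)
  have R0: "0 \<le> R" using assms(8) d0 by simp
  have sep: "dist x y \<ge> \<rho>" if "x \<in> C" "y \<in> C" "x \<noteq> y" for x y
    using assms(6) that unfolding fairly_rotating_family_def by blast
  have big: "2*R + 4*\<delta> < dist x y" if "x \<in> C" "y \<in> C" "x \<noteq> y" for x y
    using sep[OF that] assms(9) d0 by simp
  have ab: "2*R + 4*\<delta> < dist a b" and ac: "2*R + 4*\<delta> < dist a c" and bc: "2*R + 4*\<delta> < dist b c"
    using big assms(11-16) by auto
  have ba: "2*R + 4*\<delta> < dist b a" using ab by (simp add: dist_commute)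
  have th: "ereal (4*\<delta>) \<le> ereal \<theta>" using assms(10) by simp
  obtain u where u: "u \<in> proj R a b \<union> proj R a c"
    and "ereal \<theta> < (SUP v \<in> proj R a b \<union> proj R a c. dS R a u v)"
    using assms(17) unfolding projdist_def less_SUP_iff by blast
  then obtain v where v: "v \<in> proj R a b \<union> proj R a c" and uv: "ereal \<theta> < dS R a u v"
    unfolding less_SUP_iff by blast
  have step1: "dist a b + dist a c \<le> dist b c + 2*R + 4*\<delta>"
  proof -
    obtain y1 where y1: "y1 \<in> {b, c}" "u \<in> proj R a y1" using u by auto
    obtain y2 where y2: "y2 \<in> {b, c}" "v \<in> proj R a y2" using v by auto
    have h1: "2*R + 4*\<delta> < dist a y1" using y1 ab ac by auto
    have h2: "2*R + 4*\<delta> < dist a y2" using y2 ab ac by auto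
    have nle: "\<not> dS R a u v \<le> ereal (4*\<delta>)"
    proof
      assume "dS R a u v \<le> ereal (4*\<delta>)"
      then have "dS R a u v \<le> ereal \<theta>" using th by (rule order_trans)
      with uv show False by simp
    qed
    from key[OF geo hyp d0 R0 y1(2) y2(2) h1 h2] nle
    have "y1 \<noteq> y2 \<and> dist a y1 + dist a y2 \<le> dist y1 y2 + 2*R + 4*\<delta>" by blast
    then show ?thesis using y1 y2 by (auto simp: dist_commute)
  qed
  show ?thesis
    unfolding projdist_def
  proof (intro SUP_least)
    fix u v assume u: "u \<in> proj R b a \<union> proj R b c" and v: "v \<in> proj R b a \<union> proj R b c"
    obtain y1 where y1: "y1 \<in> {a, c}" "u \<in> proj R b y1" using u by auto
    obtain y2 where y2: "y2 \<in> {a, c}" "v \<in> proj R b y2" using v by auto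
    have h1: "2*R + 4*\<delta> < dist b y1" using y1 ba bc by auto
    have h2: "2*R + 4*\<delta> < dist b y2" using y2 ba bc by auto
    from key[OF geo hyp d0 R0 y1(2) y2(2) h1 h2]
    show "dS R b u v \<le> ereal \<theta>"
    proof
      assume "dS R b u v \<le> ereal (4*\<delta>)" then show ?thesis using th by (rule order_trans)
    next
      assume "y1 \<noteq> y2 \<and> dist b y1 + dist b y2 \<le> dist y1 y2 + 2*R + 4*\<delta>"
      then have "dist b a + dist b c \<le> dist a c + 2*R + 4*\<delta>" using y1 y2 by (auto simp: dist_commute)
      then have False using step1 ab by (simp add: dist_commute)
      then show ?thesis ..
    qed
  qed
qed

end
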